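(* Let $\beta_\bullet\in\{\beta,\beta_v\}$, with $\rightsquigarrow_U$ the unbiased iteration of surface reduction and $\rightsquigarrow_{pd}$ its parallel version (as in the context). Then: 1. if $M\rightsquigarrow_{pd}N$ then $M\rightsquigarrow_U^*N$; consequently $M\rightsquigarrow_{pd}^*N$ implies $M\rightsquigarrow_U^*N$; 2. if $M\rightsquigarrow_U^*N$ then there exists $N'$ such that $M\rightsquigarrow_{pd}^*N'$ and $N\rightsquigarrow_U^*N'$.
   Context: Terms $\Lambda_{\mathcal O}$: $M::=x\mid\lambda x.M\mid MM\mid\mathsf{op}(M,\dots,M)$ with $\mathsf{op}$ in a (possibly empty) set $\mathcal O$ of operator symbols with fixed arities; values $V::=x\mid\lambda x.M$. Rules $(\lambda x.M)N\mapsto_\beta M\{N/x\}$, $(\lambda x.M)V\mapsto_{\beta_v}M\{V/x\}$; $\to=\to_{\beta_\bullet}$ is the closure under all contexts. Surface reduction $\to_s$: for $\beta$, closure of $\beta$ under head contexts $H::=[\,]\mid\lambda x.H\mid HM$; for $\beta_v$, closure of $\beta_v$ under weak contexts $W::=[\,]\mid WM\mid MW$. $\rightsquigarrow_U$: if $M\to_sM'$ then $M\rightsquigarrow_UM'$; if $M$ is $\to_s$-normal: $\lambda x.P\rightsquigarrow_U\lambda x.P'$ if $P\rightsquigarrow_UP'$; $PQ\rightsquigarrow_UP'Q$ if $P\rightsquigarrow_UP'$; $PQ\rightsquigarrow_UPQ'$ if $Q\rightsquigarrow_UQ'$; $\mathsf{op}(\dots,P_i,\dots)\rightsquigarrow_U\mathsf{op}(\dots,P_i',\dots)$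 if $P_i\rightsquigarrow_UP_i'$. Parallel reduction $\rightsquigarrow_{pd}$: (1) if $M\to_sM'$ then $M\rightsquigarrow_{pd}M'$; (2) if $M$ is $\to$-normal then $M\rightsquigarrow_{pd}M$; (3) otherwise (M is $\to_s$-normal but not $\to$-normal): $\lambda x.P\rightsquigarrow_{pd}\lambda x.P'$ if $P\rightsquigarrow_{pd}P'$; $P_1P_2\rightsquigarrow_{pd}P_1'P_2'$ if $P_1\rightsquigarrow_{pd}P_1'$ and $P_2\rightsquigarrow_{pd}P_2'$; $\mathsf{op}(P_1,\dots,P_k)\rightsquigarrow_{pd}\mathsf{op}(P_1',\dots,P_k')$ if $P_i\rightsquigarrow_{pd}P_i'$ for all $1\le i\le k$. *)

theory Defs
  imports Main
begin

datatype 'op trm = Var nat | Lam "'op trm" | App "'op trm" "'op trm" | Op 'op "'op trm list"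

fun wf_trm :: "'op set \<Rightarrow> ('op \<Rightarrow> nat) \<Rightarrow> 'op trm \<Rightarrow> bool" where
  "wf_trm Ops ar (Var i) = True"
| "wf_trm Ops ar (Lam t) = wf_trm Ops ar t"
| "wf_trm Ops ar (App s t) = (wf_trm Ops ar s \<and> wf_trm Ops ar t)"
| "wf_trm Ops ar (Op f ts) = (f \<in> Ops \<and> length ts = ar f \<and> (\<forall>t\<in>set ts. wf_trm Ops ar t))"

fun lift :: "nat \<Rightarrow> 'op trm \<Rightarrow> 'op trm" where
  "lift k (Var i) = (if i < k then Var i else Var (Suc i))"
| "lift k (Lam t) = Lam (lift (Suc k) t)"
| "lift k (App s t) = App (lift k s) (lift k t)"
| "lift k (Op f ts) = Op f (map (lift k) ts)"

fun subst :: "'op trm \<Rightarrow> nat \<Rightarrow> 'op trm \<Rightarrow> 'op trm" where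
  "subst (Var i) k s = (if k < i then Var (i - 1) else if i = k then s else Var i)"
| "subst (Lam t) k s = Lam (subst t (Suc k) (lift 0 s))"
| "subst (App t u) k s = App (subst t k s) (subst u k s)"
| "subst (Op f ts) k s = Op f (map (\<lambda>t. subst t k s) ts)"

fun is_val :: "'op trm \<Rightarrow> bool" where
  "is_val (Var _) = True"
| "is_val (Lam _) = True"
| "is_val _ = False"

text \<open>The two calculi: CbN is beta, CbV is beta_v.\<close>
datatype calc = CbN | CbV

inductive root :: "calc \<Rightarrow> 'op trm \<Rightarrow> 'op trm \<Rightarrow> bool" for c where
  beta: "c = CbN \<Longrightarrow> root c (App (Lam M) N) (subst M 0 N)"
| betav: "c = CbV \<Longrightarrow> is_val V \<Longrightarrow> root c (App (Lam M) V) (subst M 0 V)"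

inductive step :: "calc \<Rightarrow> 'op trm \<Rightarrow> 'op trm \<Rightarrow> bool" for c where
  st_root: "root c M N \<Longrightarrow> step c M N"
| st_lam: "step c M N \<Longrightarrow> step c (Lam M) (Lam N)"
| st_appl: "step c M N \<Longrightarrow> step c (App M P) (App N P)"
| st_appr: "step c M N \<Longrightarrow> step c (App P M) (App P N)"
| st_op: "i < length Ms \<Longrightarrow> step c (Ms ! i) N \<Longrightarrow> step c (Op f Ms) (Op f (Ms[i := N]))"

text \<open>Surface reduction: head contexts for beta, weak contexts for beta_v.\<close>
inductive surf :: "calc \<Rightarrow> 'op trm \<Rightarrow> 'op trm \<Rightarrow> bool" for c where
  sf_root: "root c M N \<Longrightarrow> surf c M N"
| sf_lam: "c = CbN \<Longrightarrow> surf c M N \<Longrightarrow> surf c (Lam M) (Lam N)"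
| sf_appl: "surf c M N \<Longrightarrow> surf c (App M P) (App N P)"
| sf_appr: "c = CbV \<Longrightarrow> surf c M N \<Longrightarrow> surf c (App P M) (App P N)"

definition normal :: "('a \<Rightarrow> 'a \<Rightarrow> bool) \<Rightarrow> 'a \<Rightarrow> bool" where
  "normal R M \<longleftrightarrow> (\<nexists>N. R M N)"

inductive ured :: "calc \<Rightarrow> 'op trm \<Rightarrow> 'op trm \<Rightarrow> bool" for c where
  u_surf: "surf c M M' \<Longrightarrow> ured c M M'"
| u_lam: "normal (surf c) (Lam P) \<Longrightarrow> ured c P P' \<Longrightarrow> ured c (Lam P) (Lam P')"
| u_appl: "normal (surf c) (App P Q) \<Longrightarrow> ured c P P' \<Longrightarrow> ured c (App P Q) (App P' Q)"
| u_appr: "normal (surf c) (App P Q) \<Longrightarrow> ured c Q Q' \<Longrightarrow> ured c (App P Q) (App P Q')"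
| u_op: "normal (surf c) (Op f Ps) \<Longrightarrow> i < length Ps \<Longrightarrow> ured c (Ps ! i) P'
          \<Longrightarrow> ured c (Op f Ps) (Op f (Ps[i := P']))"

inductive pd :: "calc \<Rightarrow> 'op trm \<Rightarrow> 'op trm \<Rightarrow> bool" for c where
  pd_surf: "surf c M M' \<Longrightarrow> pd c M M'"
| pd_nf: "normal (step c) M \<Longrightarrow> pd c M M"
| pd_lam: "normal (surf c) (Lam P) \<Longrightarrow> \<not> normal (step c) (Lam P) \<Longrightarrow> pd c P P'
          \<Longrightarrow> pd c (Lam P) (Lam P')"
| pd_app: "normal (surf c) (App P1 P2) \<Longrightarrow> \<not> normal (step c) (App P1 P2) \<Longrightarrow>
          pd c P1 P1' \<Longrightarrow> pd c P2 P2' \<Longrightarrow> pd c (App P1 P2) (App P1' P2')"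
| pd_op: "normal (surf c) (Op f Ps) \<Longrightarrow> \<not> normal (step c) (Op f Ps) \<Longrightarrow>
          list_all2 (pd c) Ps Ps' \<Longrightarrow> pd c (Op f Ps) (Op f Ps')"

end

theory Submission
  imports Defs
begin


lemma ns_var: "normal (surf c) (Var i)"
  unfolding normal_def by (auto elim: surf.cases root.cases)

lemma ns_op: "normal (surf c) (Op f ts)"
  unfolding normal_def by (auto elim: surf.cases root.cases)

lemma ns_lam: "normal (surf c) (Lam P) \<longleftrightarrow> (c = CbN \<longrightarrow> normal (surf c) P)"
  unfolding normal_def by (auto elim: surf.cases root.cases intro: surf.intros)

lemma ns_app: "normal (surf c) (App P Q) \<longleftrightarrow>
   normal (surf c) P \<and> (c = CbV \<longrightarrow> normal (surf c) Q) \<and> \<not>(\<exists>R. P = Lam R \<and> (c = CbN \<or> is_val Q))"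
  unfolding normal_def
  apply (cases c)
   apply (auto intro: surf.intros root.intros)
     apply (erule surf.cases; auto elim: root.cases)+
  done

lemma ured_surf_or_normal: "ured c M N \<Longrightarrow> surf c M N \<or> normal (surf c) M"
  by (induction rule: ured.induct) auto

lemma ured_shape: "ured c M N \<Longrightarrow> normal (surf c) M \<Longrightarrow>
   (\<exists>P P'. M = Lam P \<and> N = Lam P' \<and> ured c P P') \<or>
   (\<exists>P Q P' Q'. M = App P Q \<and> N = App P' Q' \<and> ((ured c P P' \<and> Q' = Q) \<or> (P' = P \<and> ured c Q Q'))) \<or>
   (\<exists>f Ps i P'. M = Op f Ps \<and> i < length Ps \<and> ured c (Ps!i) P' \<and> N = Op f (Ps[i:=P']))"
  by (erule ured.cases) (auto simp: normal_def)

lemma ured_shape2: "ured c M N \<Longrightarrow> normal (surf c) M \<Longrightarrow>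
   (\<forall>R. N = Lam R \<longrightarrow> (\<exists>R'. M = Lam R')) \<and> (is_val N \<longrightarrow> is_val M)"
  by (drule (1) ured_shape) auto

lemma ured_pres: "ured c M N \<Longrightarrow> normal (surf c) M \<Longrightarrow> normal (surf c) N"
proof (induction rule: ured.induct)
  case (u_surf M M')
  then show ?case by (auto simp: normal_def)
next
  case (u_lam P P')
  then show ?case by (auto simp: ns_lam)
next
  case (u_appl P Q P')
  have nP: "normal (surf c) P" using u_appl.prems ns_app by blast
  have "normal (surf c) P'" using u_appl.IH nP by blast
  moreover have "\<forall>R. P' = Lam R \<longrightarrow> (\<exists>R'. P = Lam R')" using ured_shape2[OF u_appl.hyps(2) nP] by blast
  ultimately show ?case using u_appl.prems unfolding ns_app by blast
next
  case (u_appr P Q Q')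
  show ?case
  proof (cases c)
    case CbN
    then show ?thesis using u_appr.prems unfolding ns_app by auto
  next
    case CbV
    have nQ: "normal (surf c) Q" using u_appr.prems ns_app CbV by blast
    have "normal (surf c) Q'" using u_appr.IH nQ by blast
    moreover have "is_val Q' \<longrightarrow> is_val Q" using ured_shape2[OF u_appr.hyps(2) nQ] by blast
    ultimately show ?thesis using u_appr.prems CbV unfolding ns_app by blast
  qed
next
  case (u_op f Ps i P')
  then show ?case by (simp add: ns_op)
qed

lemma pres_appl: "normal (surf c) (App P Q) \<Longrightarrow> ured c P P' \<Longrightarrow> normal (surf c) (App P' Q)"
  using ured_pres[OF u_appl] by blast
lemma pres_appr: "normal (surf c) (App P Q) \<Longrightarrow> ured c Q Q' \<Longrightarrow> normal (surf c) (App P Q')"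
  using ured_pres[OF u_appr] by blast

lemma lam_lift: "ured c P P' \<Longrightarrow> ured c (Lam P) (Lam P')"
proof (cases c)
  case CbN
  assume u: "ured c P P'"
  from ured_surf_or_normal[OF u] show ?thesis
  proof
    assume "surf c P P'" then show ?thesis using CbN by (auto intro: surf.intros ured.intros)
  next
    assume "normal (surf c) P" then show ?thesis using CbN u by (auto intro: u_lam simp: ns_lam)
  qed
next
  case CbV
  assume u: "ured c P P'"
  then show ?thesis using CbV by (auto intro: u_lam simp: ns_lam)
qed

lemma lam_lift_star: "(ured c)\<^sup>*\<^sup>* P P' \<Longrightarrow> (ured c)\<^sup>*\<^sup>* (Lam P) (Lam P')"
  by (induction rule: rtranclp_induct) (auto intro: rtranclp.rtrancl_into_rtrancl lam_lift)

lemma appl_star: "(ured c)\<^sup>*\<^sup>* P P' \<Longrightarrow> normal (surf c) (App P Q) \<Longrightarrow>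
   (ured c)\<^sup>*\<^sup>* (App P Q) (App P' Q) \<and> normal (surf c) (App P' Q)"
proof (induction rule: rtranclp_induct)
  case base then show ?case by auto
next
  case (step y z)
  then show ?case by (meson pres_appl rtranclp.rtrancl_into_rtrancl u_appl)
qed

lemma appr_star: "(ured c)\<^sup>*\<^sup>* Q Q' \<Longrightarrow> normal (surf c) (App P Q) \<Longrightarrow>
   (ured c)\<^sup>*\<^sup>* (App P Q) (App P Q') \<and> normal (surf c) (App P Q')"
proof (induction rule: rtranclp_induct)
  case base then show ?case by auto
next
  case (step y z)
  then show ?case by (meson pres_appr rtranclp.rtrancl_into_rtrancl u_appr)
qed

lemma app_star: "normal (surf c) (App P Q) \<Longrightarrow> (ured c)\<^sup>*\<^sup>* P P' \<Longrightarrow> (ured c)\<^sup>*\<^sup>* Q Q' \<Longrightarrow>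
   (ured c)\<^sup>*\<^sup>* (App P Q) (App P' Q') \<and> normal (surf c) (App P' Q')"
  by (meson appl_star appr_star rtranclp_trans)

lemma op_step: "ured c a b \<Longrightarrow> ured c (Op f (pre @ a # xs)) (Op f (pre @ b # xs))"
  using u_op[of c f "pre @ a # xs" "length pre" b] by (simp add: ns_op list_update_append)

lemma op_step_star: "(ured c)\<^sup>*\<^sup>* a b \<Longrightarrow> (ured c)\<^sup>*\<^sup>* (Op f (pre @ a # xs)) (Op f (pre @ b # xs))"
  by (induction rule: rtranclp_induct) (auto intro: rtranclp.rtrancl_into_rtrancl op_step)

lemma op_lift_star: "list_all2 (ured c)\<^sup>*\<^sup>* Ps Ps' \<Longrightarrow> (ured c)\<^sup>*\<^sup>* (Op f (pre @ Ps)) (Op f (pre @ Ps'))"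
proof (induction Ps Ps' arbitrary: pre rule: list_all2_induct)
  case Nil then show ?case by simp
next
  case (Cons x xs y ys)
  have "(ured c)\<^sup>*\<^sup>* (Op f (pre @ x # xs)) (Op f (pre @ y # xs))" by (rule op_step_star[OF Cons.hyps(1)])
  moreover have "(ured c)\<^sup>*\<^sup>* (Op f ((pre @ [y]) @ xs)) (Op f ((pre @ [y]) @ ys))" by (rule Cons.IH)
  ultimately show ?case by simp
qed

lemma op_lift_star': "list_all2 (ured c)\<^sup>*\<^sup>* Ps Ps' \<Longrightarrow> (ured c)\<^sup>*\<^sup>* (Op f Ps) (Op f Ps')"
  using op_lift_star[of c Ps Ps' f "[]"] by simp

lemma pd_ured: "pd c M N \<Longrightarrow> (ured c)\<^sup>*\<^sup>* M N"
proof (induction rule: pd.induct)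
  case (pd_surf M M') then show ?case by (auto intro: u_surf)
next
  case (pd_nf M) then show ?case by simp
next
  case (pd_lam P P') then show ?case by (simp add: lam_lift_star)
next
  case (pd_app P1 P2 P1' P2') then show ?case using app_star by blast
next
  case (pd_op f Ps Ps')
  then have "list_all2 (ured c)\<^sup>*\<^sup>* Ps Ps'" by (auto elim: list_all2_mono)
  then show ?case by (rule op_lift_star')
qed



lemma surf_step: "surf c M N \<Longrightarrow> step c M N"
  by (induction rule: surf.induct) (auto intro: step.intros)

lemma nstep_lam: "normal (step c) (Lam P) \<Longrightarrow> normal (step c) P"
  unfolding normal_def by (auto intro: step.intros)
lemma nstep_app: "normal (step c) (App P Q) \<Longrightarrow> normal (step c) P \<and> normal (step c) Q"
  unfolding normal_def by (auto intro: step.intros)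
lemma nstep_op: "normal (step c) (Op f Ps) \<Longrightarrow> i < length Ps \<Longrightarrow> normal (step c) (Ps!i)"
  unfolding normal_def by (auto intro: step.intros)
lemma nstep_var: "normal (step c) (Var i)"
  unfolding normal_def by (auto elim: step.cases root.cases)

lemma pd_nf_eq: "normal (step c) M \<Longrightarrow> pd c M N \<Longrightarrow> N = M"
  by (erule pd.cases) (auto simp: normal_def dest: surf_step)

lemma list_choose: "(\<forall>x\<in>set xs. \<exists>y. R x y) \<Longrightarrow> \<exists>ys. list_all2 R xs ys"
proof (induction xs)
  case Nil then show ?case by simp
next
  case (Cons a xs)
  then obtain y ys where "R a y" "list_all2 R xs ys" by auto
  then show ?case by auto
qed

lemma pd_total: "\<exists>N. pd c M N"
proof (induction M)
  case (Var i) then show ?case using nstep_var pd_nf by blast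
next
  case (Lam P)
  then obtain P' where p: "pd c P P'" by blast
  show ?case
  proof (cases "normal (surf c) (Lam P)")
    case False then show ?thesis unfolding normal_def by (auto intro: pd_surf)
  next
    case True
    show ?thesis
    proof (cases "normal (step c) (Lam P)")
      case True then show ?thesis by (auto intro: pd_nf)
    next
      case False then show ?thesis using pd_lam p \<open>normal (surf c) (Lam P)\<close> by blast
    qed
  qed
next
  case (App P Q)
  then obtain P' Q' where p: "pd c P P'" "pd c Q Q'" by blast
  show ?case
  proof (cases "normal (surf c) (App P Q)")
    case False then show ?thesis unfolding normal_def by (auto intro: pd_surf)
  next
    case True
    show ?thesis
    proof (cases "normal (step c) (App P Q)")
      case True then show ?thesis by (auto intro: pd_nf)
    next
      case False then show ?thesis using pd_app p \<open>normal (surf c) (App P Q)\<close> by blast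
    qed
  qed
next
  case (Op f Ps)
  then obtain Ps' where "list_all2 (pd c) Ps Ps'" using list_choose[of Ps "pd c"] by blast
  then show ?case using ns_op[of c f Ps] pd_op[of c f Ps Ps'] pd_nf[of c "Op f Ps"] by blast
qed

lemma pd_pad: "(pd c ^^ a) M X \<Longrightarrow> \<exists>X'. (pd c ^^ (a + d)) M X' \<and> (ured c)\<^sup>*\<^sup>* X X'"
proof (induction d)
  case 0 then show ?case by auto
next
  case (Suc d)
  then obtain X' where X': "(pd c ^^ (a + d)) M X'" "(ured c)\<^sup>*\<^sup>* X X'" by blast
  obtain Y where "pd c X' Y" using pd_total by blast
  then have "(pd c ^^ Suc (a + d)) M Y" using X' by (rule_tac relpowp_Suc_I)
  moreover have "(ured c)\<^sup>*\<^sup>* X Y" using X' \<open>pd c X' Y\<close> by (meson pd_ured rtranclp_trans)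
  ultimately show ?case by auto
qed

lemma pd_pad': "(pd c ^^ a) M X \<Longrightarrow> a \<le> K \<Longrightarrow> \<exists>X'. (pd c ^^ K) M X' \<and> (ured c)\<^sup>*\<^sup>* X X'"
proof -
  assume a: "(pd c ^^ a) M X" "a \<le> K"
  then have "a + (K - a) = K" by simp
  then show ?thesis using pd_pad[OF a(1), where d="K - a"] by simp
qed

lemma pdn_ured: "(pd c ^^ k) M N \<Longrightarrow> (ured c)\<^sup>*\<^sup>* M N"
proof -
  assume "(pd c ^^ k) M N"
  then have "(pd c)\<^sup>*\<^sup>* M N" by (rule relpowp_imp_rtranclp)
  then show ?thesis by (induction rule: rtranclp_induct) (auto intro: rtranclp_trans pd_ured)
qed

lemma lift_lam: "(pd c ^^ k) P P' \<Longrightarrow> normal (surf c) (Lam P) \<Longrightarrow> (pd c ^^ k) (Lam P) (Lam P')"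
proof (induction k arbitrary: P)
  case 0 then show ?case by simp
next
  case (Suc k)
  from Suc.prems(1) obtain P1 where p1: "pd c P P1" "(pd c ^^ k) P1 P'" by (meson relpowp_Suc_D2)
  have st: "pd c (Lam P) (Lam P1)"
  proof (cases "normal (step c) (Lam P)")
    case True
    then have "P1 = P" using pd_nf_eq nstep_lam p1(1) by blast
    then show ?thesis using True pd_nf by simp
  next
    case False then show ?thesis using pd_lam Suc.prems(2) p1(1) by blast
  qed
  have "normal (surf c) (Lam P1)"
  proof -
    have "(ured c)\<^sup>*\<^sup>* (Lam P) (Lam P1)" using st pd_ured by blast
    then show ?thesis using Suc.prems(2)
      by (induction rule: rtranclp_induct) (auto dest: ured_pres)
  qed
  then have "(pd c ^^ k) (Lam P1) (Lam P')" using Suc.IH p1(2) by blast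
  then show ?case using st by (meson relpowp_Suc_I2)
qed

lemma lift_app: "(pd c ^^ k) P P' \<Longrightarrow> (pd c ^^ k) Q Q' \<Longrightarrow> normal (surf c) (App P Q) \<Longrightarrow>
   (pd c ^^ k) (App P Q) (App P' Q')"
proof (induction k arbitrary: P Q)
  case 0 then show ?case by simp
next
  case (Suc k)
  from Suc.prems(1) obtain P1 where p1: "pd c P P1" "(pd c ^^ k) P1 P'" by (meson relpowp_Suc_D2)
  from Suc.prems(2) obtain Q1 where q1: "pd c Q Q1" "(pd c ^^ k) Q1 Q'" by (meson relpowp_Suc_D2)
  have st: "pd c (App P Q) (App P1 Q1)"
  proof (cases "normal (step c) (App P Q)")
    case True
    then have "P1 = P" "Q1 = Q" using pd_nf_eq nstep_app p1(1) q1(1) by blast+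
    then show ?thesis using True pd_nf by simp
  next
    case False then show ?thesis using pd_app Suc.prems(3) p1(1) q1(1) by blast
  qed
  have "normal (surf c) (App P1 Q1)"
    using app_star[OF Suc.prems(3) pd_ured[OF p1(1)] pd_ured[OF q1(1)]] by blast
  then have "(pd c ^^ k) (App P1 Q1) (App P' Q')" using Suc.IH p1(2) q1(2) by blast
  then show ?case using st by (meson relpowp_Suc_I2)
qed

lemma list_all2_split: "list_all2 (\<lambda>x y. (R ^^ Suc k) x y) xs ys \<Longrightarrow>
   \<exists>zs. list_all2 R xs zs \<and> list_all2 (R ^^ k) zs ys"
proof (induction xs ys rule: list_all2_induct)
  case Nil then show ?case by simp
next
  case (Cons x xs y ys)
  from Cons.hyps(1) obtain z where "R x z" "(R ^^ k) z y" by (meson relpowp_Suc_D2)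
  with Cons.IH show ?case by auto
qed

lemma lift_op: "list_all2 (pd c ^^ k) Ps Ps' \<Longrightarrow> (pd c ^^ k) (Op f Ps) (Op f Ps')"
proof (induction k arbitrary: Ps)
  case 0 then show ?case by (simp add: list_all2_eq)
next
  case (Suc k)
  obtain Qs where
    q: "list_all2 (pd c) Ps Qs" "list_all2 (pd c ^^ k) Qs Ps'" using list_all2_split[OF Suc.prems] by blast
  have st: "pd c (Op f Ps) (Op f Qs)"
  proof (cases "normal (step c) (Op f Ps)")
    case True
    have "Qs = Ps" using q(1)
    proof (intro nth_equalityI)
      show "length Qs = length Ps" using q(1) by (simp add: list_all2_lengthD)
      fix i assume "i < length Qs"
      then have "i < length Ps" "pd c (Ps ! i) (Qs ! i)" using q(1) by (auto simp: list_all2_conv_all_nth)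
      then show "Qs ! i = Ps ! i" using pd_nf_eq[OF nstep_op[OF True]] by blast
    qed
    then show ?thesis using True pd_nf by simp
  next
    case False show ?thesis by (rule pd_op[OF ns_op False q(1)])
  qed
  have "(pd c ^^ k) (Op f Qs) (Op f Ps')" using Suc.IH q(2) by blast
  then show ?case using st by (meson relpowp_Suc_I2)
qed



lemma dec_lam: "(ured c ^^ n) (Lam P) N \<Longrightarrow> normal (surf c) (Lam P) \<Longrightarrow>
   \<exists>P'. N = Lam P' \<and> (ured c ^^ n) P P' \<and> normal (surf c) N"
proof (induction n arbitrary: N)
  case 0 then show ?case by simp
next
  case (Suc n)
  from Suc.prems(1) obtain Y where y: "(ured c ^^ n) (Lam P) Y" "ured c Y N" by (meson relpowp_Suc_E)
  from Suc.IH[OF y(1) Suc.prems(2)] obtain P1 where p1: "Y = Lam P1" "(ured c ^^ n) P P1" "normal (surf c) Y" by blast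
  from ured_shape[OF y(2) p1(3)] p1(1) obtain P' where "N = Lam P'" "ured c P1 P'" by auto
  moreover have "normal (surf c) N" using ured_pres y(2) p1(3) by blast
  moreover have "(ured c ^^ Suc n) P P'" using relpowp_Suc_I[where P="ured c", OF p1(2)] calculation(2) by blast
  ultimately show ?case by blast
qed

lemma dec_app: "(ured c ^^ n) (App P Q) N \<Longrightarrow> normal (surf c) (App P Q) \<Longrightarrow>
   \<exists>P' Q' a b. N = App P' Q' \<and> (ured c ^^ a) P P' \<and> (ured c ^^ b) Q Q' \<and> a \<le> n \<and> b \<le> n
     \<and> normal (surf c) N"
proof (induction n arbitrary: N)
  case 0 then show ?case by fastforce
next
  case (Suc n)
  from Suc.prems(1) obtain Y where y: "(ured c ^^ n) (App P Q) Y" "ured c Y N" by (meson relpowp_Suc_E)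
  from Suc.IH[OF y(1) Suc.prems(2)] obtain P1 Q1 a b where
    p1: "Y = App P1 Q1" "(ured c ^^ a) P P1" "(ured c ^^ b) Q Q1" "a \<le> n" "b \<le> n" "normal (surf c) Y"
    by blast
  have nN: "normal (surf c) N" using ured_pres y(2) p1(6) by blast
  from ured_shape[OF y(2) p1(6)] p1(1) obtain P' Q' where
    pq: "N = App P' Q'" "(ured c P1 P' \<and> Q' = Q1) \<or> (P' = P1 \<and> ured c Q1 Q')" by auto
  from pq(2) show ?case
  proof
    assume h: "ured c P1 P' \<and> Q' = Q1"
    then have "(ured c ^^ Suc a) P P'" using p1(2) by (meson relpowp_Suc_I)
    then show ?thesis using pq(1) h p1 nN by (intro exI[of _ P'] exI[of _ Q'] exI[of _ "Suc a"] exI[of _ b]) auto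
  next
    assume h: "P' = P1 \<and> ured c Q1 Q'"
    then have "(ured c ^^ Suc b) Q Q'" using p1(3) by (meson relpowp_Suc_I)
    then show ?thesis using pq(1) h p1 nN by (intro exI[of _ P'] exI[of _ Q'] exI[of _ a] exI[of _ "Suc b"]) auto
  qed
qed

lemma dec_op: "(ured c ^^ n) (Op f Ps) N \<Longrightarrow>
   \<exists>Ps'. N = Op f Ps' \<and> list_all2 (\<lambda>x y. \<exists>a\<le>n. (ured c ^^ a) x y) Ps Ps'"
proof (induction n arbitrary: N)
  case 0 then show ?case by (auto simp: list_all2_conv_all_nth intro: exI[of _ 0])
next
  case (Suc n)
  from Suc.prems(1) obtain Y where y: "(ured c ^^ n) (Op f Ps) Y" "ured c Y N" by (meson relpowp_Suc_E)
  from Suc.IH[OF y(1)] obtain Qs where q: "Y = Op f Qs" "list_all2 (\<lambda>x y. \<exists>a\<le>n. (ured c ^^ a) x y) Ps Qs"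
    by blast
  from ured_shape[OF y(2)] q(1) ns_op obtain i P' where
    st: "i < length Qs" "ured c (Qs!i) P'" "N = Op f (Qs[i:=P'])" by fastforce
  have "list_all2 (\<lambda>x y. \<exists>a\<le>Suc n. (ured c ^^ a) x y) Ps (Qs[i:=P'])"
    unfolding list_all2_conv_all_nth
  proof (intro conjI allI impI)
    show "length Ps = length (Qs[i := P'])" using q(2) by (simp add: list_all2_lengthD)
    fix j assume j: "j < length Ps"
    then obtain a where a: "a \<le> n" "(ured c ^^ a) (Ps!j) (Qs!j)" using q(2) by (auto simp: list_all2_conv_all_nth)
    show "\<exists>a\<le>Suc n. (ured c ^^ a) (Ps ! j) (Qs[i := P'] ! j)"
    proof (cases "j = i")
      case True
      then have "(ured c ^^ Suc a) (Ps!j) (Qs[i := P'] ! j)" using a st by (auto intro: relpowp_Suc_I)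
      then show ?thesis using a(1) by (intro exI[of _ "Suc a"]) auto
    next
      case False
      then show ?thesis using a by (intro exI[of _ a]) auto
    qed
  qed
  then show ?case using st(3) by blast
qed

definition jn :: "calc \<Rightarrow> 'op trm \<Rightarrow> 'op trm \<Rightarrow> bool" where
  "jn c M N \<longleftrightarrow> (\<exists>N'. (pd c)\<^sup>*\<^sup>* M N' \<and> (ured c)\<^sup>*\<^sup>* N N')"

lemma jn_pdn: "jn c M N \<Longrightarrow> \<exists>k X. (pd c ^^ k) M X \<and> (ured c)\<^sup>*\<^sup>* N X"
  unfolding jn_def by (meson rtranclp_imp_relpowp)

lemma nn_lemma:
  fixes M N :: "'a trm"
  assumes IH: "\<And>m. m < n \<Longrightarrow> \<forall>M' N'::'a trm. (ured c ^^ m) M' N' \<longrightarrow> jn c M' N'"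
    and nm: "\<not> normal (surf c) M" and h: "(ured c ^^ n) M N"
  shows "jn c M N"
proof (cases n)
  case 0 then have "N = M" using h by simp
  then show ?thesis unfolding jn_def by (intro exI[of _ M]) simp
next
  case (Suc m)
  then have "(ured c ^^ Suc m) M N" using h by simp
  then obtain N1 where n1: "ured c M N1" "(ured c ^^ m) N1 N" by (rule relpowp_Suc_E2)
  have "surf c M N1" using ured_surf_or_normal[OF n1(1)] nm by (elim disjE) simp_all
  have mn: "m < n" using Suc by simp
  have "jn c N1 N" by (rule IH[OF mn, rule_format, OF n1(2)])
  moreover have "pd c M N1" using \<open>surf c M N1\<close> by (rule pd_surf)
  ultimately obtain N' where "(pd c)\<^sup>*\<^sup>* N1 N'" "(ured c)\<^sup>*\<^sup>* N N'" "pd c M N1" unfolding jn_def by blast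
  then have "(pd c)\<^sup>*\<^sup>* M N'" "(ured c)\<^sup>*\<^sup>* N N'" by (auto intro: converse_rtranclp_into_rtranclp)
  then show ?thesis unfolding jn_def by blast
qed

lemma main3: "\<forall>M N :: 'a trm. (ured c ^^ n) M N \<longrightarrow> jn c M N"
proof (induction n rule: less_induct)
  case (less n)
  have nn: "jn c M N" if "\<not> normal (surf c) M" "(ured c ^^ n) M N" for M N :: "'a trm"
    by (rule nn_lemma[OF less.IH that])
  have "\<forall>N. (ured c ^^ n) M N \<longrightarrow> jn c M N" for M :: "'a trm"
  proof (induction M)
    case (Var i)
    show ?case
    proof (intro allI impI)
      fix N :: "'a trm" assume h: "(ured c ^^ n) (Var i) N"
      show "jn c (Var i) N"
      proof (cases n)
        case 0 then have "N = Var i" using h by simp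
        then show ?thesis unfolding jn_def by (intro exI[of _ "Var i"]) simp
      next
        case (Suc m)
        then have "(ured c ^^ Suc m) (Var i) N" using h by simp
        then obtain N1 :: "'a trm" where "ured c (Var i) N1" using relpowp_Suc_D2[where P="ured c"] by metis
        from ured_shape[OF this ns_var] show ?thesis by auto
      qed
    qed
  next
    case (Lam P)
    show ?case
    proof (intro allI impI)
      fix N :: "'a trm" assume h: "(ured c ^^ n) (Lam P) N"
      show "jn c (Lam P) N"
      proof (cases "normal (surf c) (Lam P)")
        case False then show ?thesis using nn h by blast
      next
        case True
        from dec_lam[OF h True] obtain P' where p: "N = Lam P'" "(ured c ^^ n) P P'" by blast
        from Lam.IH p(2) obtain k X where x: "(pd c ^^ k) P X" "(ured c)\<^sup>*\<^sup>* P' X"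
          using jn_pdn by blast
        have "(pd c ^^ k) (Lam P) (Lam X)" using lift_lam[OF x(1) True] .
        then have "(pd c)\<^sup>*\<^sup>* (Lam P) (Lam X)" by (rule relpowp_imp_rtranclp)
        moreover have "(ured c)\<^sup>*\<^sup>* N (Lam X)" using p(1) lam_lift_star[OF x(2)] by simp
        ultimately show ?thesis unfolding jn_def by blast
      qed
    qed
  next
    case (App P Q)
    show ?case
    proof (intro allI impI)
      fix N :: "'a trm" assume h: "(ured c ^^ n) (App P Q) N"
      show "jn c (App P Q) N"
      proof (cases "normal (surf c) (App P Q)")
        case False then show ?thesis using nn h by blast
      next
        case True
        from dec_app[OF h True] obtain P' Q' a b where
          p: "N = App P' Q'" "(ured c ^^ a) P P'" "(ured c ^^ b) Q Q'" "a \<le> n" "b \<le> n" "normal (surf c) N"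
          by blast
        have "jn c P P'"
        proof (cases "a < n")
          case True then show ?thesis using less.IH p(2) by blast
        next
          case False then have "a = n" using p(4) by simp
          then show ?thesis using App.IH(1) p(2) by blast
        qed
        then obtain k1 X1 where x1: "(pd c ^^ k1) P X1" "(ured c)\<^sup>*\<^sup>* P' X1" using jn_pdn by blast
        have "jn c Q Q'"
        proof (cases "b < n")
          case True then show ?thesis using less.IH p(3) by blast
        next
          case False then have "b = n" using p(5) by simp
          then show ?thesis using App.IH(2) p(3) by blast
        qed
        then obtain k2 X2 where x2: "(pd c ^^ k2) Q X2" "(ured c)\<^sup>*\<^sup>* Q' X2" using jn_pdn by blast
        obtain Y1 where y1: "(pd c ^^ max k1 k2) P Y1" "(ured c)\<^sup>*\<^sup>* X1 Y1"
          using pd_pad'[OF x1(1), of "max k1 k2"] by auto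
        obtain Y2 where y2: "(pd c ^^ max k1 k2) Q Y2" "(ured c)\<^sup>*\<^sup>* X2 Y2"
          using pd_pad'[OF x2(1), of "max k1 k2"] by auto
        have "(pd c ^^ max k1 k2) (App P Q) (App Y1 Y2)" using lift_app[OF y1(1) y2(1) True] .
        then have "(pd c)\<^sup>*\<^sup>* (App P Q) (App Y1 Y2)" by (rule relpowp_imp_rtranclp)
        moreover have "(ured c)\<^sup>*\<^sup>* N (App Y1 Y2)"
          using app_star[OF p(6)[unfolded p(1)] rtranclp_trans[OF x1(2) y1(2)] rtranclp_trans[OF x2(2) y2(2)]]
            p(1) by blast
        ultimately show ?thesis unfolding jn_def by blast
      qed
    qed
  next
    case (Op f Ps)
    show ?case
    proof (intro allI impI)
      fix N :: "'a trm" assume h: "(ured c ^^ n) (Op f Ps) N"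
      from dec_op[OF h] obtain Ps' where p: "N = Op f Ps'"
        "list_all2 (\<lambda>x y. \<exists>a\<le>n. (ured c ^^ a) x y) Ps Ps'" by blast
      have len: "length Ps' = length Ps" using p(2) by (simp add: list_all2_lengthD)
      have ex1: "\<forall>i. \<exists>kX. i < length Ps \<longrightarrow> ((pd c ^^ fst kX) (Ps!i) (snd kX) \<and> (ured c)\<^sup>*\<^sup>* (Ps'!i) (snd kX))"
      proof (intro allI)
        fix i
        show "\<exists>kX. i < length Ps \<longrightarrow> ((pd c ^^ fst kX) (Ps!i) (snd kX) \<and> (ured c)\<^sup>*\<^sup>* (Ps'!i) (snd kX))"
        proof (cases "i < length Ps")
          case False then show ?thesis by simp
        next
          case True
        note i = True
        obtain a where a: "a \<le> n" "(ured c ^^ a) (Ps!i) (Ps'!i)" using p(2) i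
          by (auto simp: list_all2_conv_all_nth)
        have "jn c (Ps!i) (Ps'!i)"
        proof (cases "a < n")
          case True then show ?thesis using less.IH a(2) by blast
        next
          case False then have "a = n" using a(1) by simp
          have "Ps!i \<in> set Ps" using i by simp
          then show ?thesis using Op.IH[of "Ps!i"] \<open>a = n\<close> a(2) by blast
        qed
        then obtain k X where "(pd c ^^ k) (Ps!i) X" "(ured c)\<^sup>*\<^sup>* (Ps'!i) X" using jn_pdn by blast
        then show "\<exists>kX. i < length Ps \<longrightarrow> ((pd c ^^ fst kX) (Ps!i) (snd kX) \<and> (ured c)\<^sup>*\<^sup>* (Ps'!i) (snd kX))"
          by (intro exI[of _ "(k, X)"]) simp
      qed
      qed
      obtain g where g: "\<And>i. i < length Ps \<Longrightarrow> (pd c ^^ fst (g i)) (Ps!i) (snd (g i)) \<and> (ured c)\<^sup>*\<^sup>* (Ps'!i) (snd (g i))"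
        using choice[OF ex1] by blast
      define K where "K = (\<Sum>i<length Ps. fst (g i))"
      have ex2: "\<forall>i. \<exists>Y. i < length Ps \<longrightarrow> ((pd c ^^ K) (Ps!i) Y \<and> (ured c)\<^sup>*\<^sup>* (Ps'!i) Y)"
      proof (intro allI)
        fix i
        show "\<exists>Y. i < length Ps \<longrightarrow> ((pd c ^^ K) (Ps!i) Y \<and> (ured c)\<^sup>*\<^sup>* (Ps'!i) Y)"
        proof (cases "i < length Ps")
          case False then show ?thesis by simp
        next
          case True
        note i = True
        have le: "fst (g i) \<le> K" unfolding K_def
          using i by (intro member_le_sum) auto
        obtain Y where "(pd c ^^ K) (Ps!i) Y" "(ured c)\<^sup>*\<^sup>* (snd (g i)) Y"
          using pd_pad'[OF conjunct1[OF g[OF i]] le] by blast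
        then show ?thesis
          using g[OF i] by (meson rtranclp_trans)
      qed
      qed
      obtain h where hh: "\<And>i. i < length Ps \<Longrightarrow> (pd c ^^ K) (Ps!i) (h i) \<and> (ured c)\<^sup>*\<^sup>* (Ps'!i) (h i)"
        using choice[OF ex2] by blast
      define Ys where "Ys = map h [0..<length Ps]"
      have l1: "list_all2 (pd c ^^ K) Ps Ys" unfolding Ys_def list_all2_conv_all_nth using hh by auto
      have l2: "list_all2 (ured c)\<^sup>*\<^sup>* Ps' Ys" unfolding Ys_def list_all2_conv_all_nth using hh len by auto
      have "(pd c)\<^sup>*\<^sup>* (Op f Ps) (Op f Ys)" using lift_op[OF l1] by (rule relpowp_imp_rtranclp)
      moreover have "(ured c)\<^sup>*\<^sup>* N (Op f Ys)" using op_lift_star'[OF l2] p(1) by simp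
      ultimately show "jn c (Op f Ps) N" unfolding jn_def by blast
    qed
  qed
  then show ?case by blast
qed


theorem mainTheorem14:
  fixes c :: calc and Ops :: "'op set" and ar :: "'op \<Rightarrow> nat"
  shows "(\<forall>M N :: 'op trm. wf_trm Ops ar M \<longrightarrow> pd c M N \<longrightarrow> (ured c)\<^sup>*\<^sup>* M N)
       \<and> (\<forall>M N :: 'op trm. wf_trm Ops ar M \<longrightarrow> (pd c)\<^sup>*\<^sup>* M N \<longrightarrow> (ured c)\<^sup>*\<^sup>* M N)
       \<and> (\<forall>M N :: 'op trm. wf_trm Ops ar M \<longrightarrow> (ured c)\<^sup>*\<^sup>* M N \<longrightarrow>
            (\<exists>N'. (pd c)\<^sup>*\<^sup>* M N' \<and> (ured c)\<^sup>*\<^sup>* N N'))"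
proof (intro conjI allI impI)
  fix M N :: "'op trm"
  assume "pd c M N"
  then show "(ured c)\<^sup>*\<^sup>* M N" by (rule pd_ured)
next
  fix M N :: "'op trm"
  assume "(pd c)\<^sup>*\<^sup>* M N"
  then obtain k where "(pd c ^^ k) M N" using rtranclp_imp_relpowp by metis
  then show "(ured c)\<^sup>*\<^sup>* M N" by (rule pdn_ured)
next
  fix M N :: "'op trm"
  assume "(ured c)\<^sup>*\<^sup>* M N"
  then obtain n where nn: "(ured c ^^ n) M N" using rtranclp_imp_relpowp by metis
  have "jn c M N" by (rule main3[rule_format, OF nn])
  then show "\<exists>N'. (pd c)\<^sup>*\<^sup>* M N' \<and> (ured c)\<^sup>*\<^sup>* N N'" unfolding jn_def .
qed

end
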